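(* The rectangle locus for two pairs of lines in the plane is either the empty set, a point, a line with an open segment missing, a line, a hyperbola, or the entire plane.
   Context: A pair of lines means two distinct lines; two pairs of lines are distinct pairs, possibly sharing one line. The rectangle locus of two pairs $L_1,L_3$ and $L_2,L_4$ is the set of points $p$ in the plane that are the midpoint both of a segment joining $L_1$ and $L_3$ and of a segment joining $L_2$ and $L_4$, these two segments having equal length (equivalently, centers of possibly degenerate rectangles whose diagonals join the lines of the respective pairs). A hyperbola here may be degenerate, i.e. a set $\{{\bf x}:({\bf x}-{\bf p})^TC({\bf x}-{\bf p})=k\}$ with $C$ real symmetric $2\times2$, $\det C<0$, and any $k\in\mathbb{R}$. *)

theory Defs
  imports "HOL-Analysis.Analysis"
begin

type_synonym point = "real^2"

definition is_line :: "point set \<Rightarrow> bool" where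
  "is_line L \<longleftrightarrow> (\<exists>a v. v \<noteq> 0 \<and> L = {a + t *\<^sub>R v | t. True})"

definition rectangle_locus :: "point set \<Rightarrow> point set \<Rightarrow> point set \<Rightarrow> point set \<Rightarrow> point set" where
  "rectangle_locus L1 L3 L2 L4 =
     {p. \<exists>a1 a3 b2 b4. a1 \<in> L1 \<and> a3 \<in> L3 \<and> b2 \<in> L2 \<and> b4 \<in> L4 \<and>
          p = midpoint a1 a3 \<and> p = midpoint b2 b4 \<and> dist a1 a3 = dist b2 b4}"

text \<open>Possibly degenerate hyperbola.\<close>
definition is_hyperbola :: "point set \<Rightarrow> bool" where
  "is_hyperbola H \<longleftrightarrow> (\<exists>(C::real^2^2) p k. transpose C = C \<and> det C < 0 \<and>
      H = {x. (x - p) \<bullet> (C *v (x - p)) = k})"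

definition is_line_minus_open_segment :: "point set \<Rightarrow> bool" where
  "is_line_minus_open_segment S \<longleftrightarrow> (\<exists>L a b. is_line L \<and> a \<in> L \<and> b \<in> L \<and> a \<noteq> b \<and>
      S = L - open_segment a b)"

end

theory Submission
  imports Defs
begin

lemma vec2_eq: "(x::real^2) = y \<longleftrightarrow> x$1 = y$1 \<and> x$2 = y$2"
  by (simp add: vec_eq_iff forall_2)

lemma norm2: "(norm (x::real^2))^2 = (x$1)^2 + (x$2)^2"
  by (simp only: power2_norm_eq_inner) (simp add: inner_vec_def sum_2 power2_eq_square)

lemma line_normal:
  fixes L :: "point set"
  assumes "is_line L"
  shows "\<exists>n1 n2 c. (n1 \<noteq> 0 \<or> n2 \<noteq> 0) \<and> L = {x. n1 * x$1 + n2 * x$2 = c}"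
proof -
  obtain a v where v: "v \<noteq> 0" and L: "L = {a + t *\<^sub>R v | t. True}"
    using assms unfolding is_line_def by blast
  have v12: "v$1 \<noteq> 0 \<or> v$2 \<noteq> 0" using v by (simp add: vec2_eq)
  have "L = {x. v$2 * x$1 + (- v$1) * x$2 = v$2 * a$1 - v$1 * a$2}"
  proof (intro set_eqI iffI)
    fix x :: point assume "x \<in> L"
    then obtain t where "x = a + t *\<^sub>R v" using L by blast
    then show "x \<in> {x. v$2 * x$1 + (- v$1) * x$2 = v$2 * a$1 - v$1 * a$2}"
      by (simp add: algebra_simps)
  next
    fix x :: point assume x: "x \<in> {x. v$2 * x$1 + (- v$1) * x$2 = v$2 * a$1 - v$1 * a$2}"
    have xe: "v$2 * x$1 - v$1 * x$2 = v$2 * a$1 - v$1 * a$2" using x by simp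
    show "x \<in> L"
    proof (cases "v$1 = 0")
      case False
      define t where "t = (x$1 - a$1) / v$1"
      have "x$1 = a$1 + t * v$1" unfolding t_def using False by simp
      moreover have "x$2 = a$2 + t * v$2" unfolding t_def using False xe
        by (simp add: field_simps)
      ultimately have "x = a + t *\<^sub>R v" unfolding vec2_eq by simp
      then show ?thesis using L by blast
    next
      case True
      then have v2: "v$2 \<noteq> 0" using v12 by simp
      define t where "t = (x$2 - a$2) / v$2"
      have "x$2 = a$2 + t * v$2" unfolding t_def using v2 by simp
      moreover have "x$1 = a$1 + t * v$1" unfolding t_def using True v2 xe
        by (simp add: field_simps)
      ultimately have "x = a + t *\<^sub>R v" unfolding vec2_eq by simp
      then show ?thesis using L by blast
    qed
  qed
  then have "(v$2 \<noteq> 0 \<or> - v$1 \<noteq> 0) \<and> L = {x. v$2 * x$1 + (- v$1) * x$2 = v$2 * a$1 - v$1 * a$2}"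
    using v12 by auto
  note th = this
  show ?thesis by (rule exI, rule exI, rule exI, rule th)
qed

lemma line_param:
  assumes "n1 \<noteq> 0 \<or> n2 \<noteq> 0"
  shows "\<exists>a. {x::real^2. n1 * x$1 + n2 * x$2 = c} = {a + t *\<^sub>R vector [-n2, n1] | t. True}"
proof -
  define N where "N = n1^2 + n2^2"
  have N: "N > 0" using assms unfolding N_def by (auto simp: sum_power2_gt_zero_iff)
  define a :: "real^2" where "a = vector [c*n1/N, c*n2/N]"
  define v :: "real^2" where "v = vector [-n2, n1]"
  have v: "v \<noteq> 0" using assms by (auto simp: v_def vec2_eq)
  have "{x::real^2. n1 * x$1 + n2 * x$2 = c} = {a + t *\<^sub>R v | t. True}"
  proof (intro set_eqI iffI)
    fix x :: "real^2" assume x: "x \<in> {x. n1 * x$1 + n2 * x$2 = c}"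
    define t where "t = (n1 * x$2 - n2 * x$1) / N"
    have N0: "N \<noteq> 0" using N by simp
    have c: "c = n1 * x$1 + n2 * x$2" using x by simp
    have e1: "x$1 * N = c*n1 - (n1 * x$2 - n2 * x$1) * n2"
      unfolding c N_def power2_eq_square by algebra
    have e2: "x$2 * N = c*n2 + (n1 * x$2 - n2 * x$1) * n1"
      unfolding c N_def power2_eq_square by algebra
    have "x$1 = c*n1/N - t * n2" unfolding t_def using N0 e1
      by (simp add: field_simps)
    moreover have "x$2 = c*n2/N + t * n1" unfolding t_def using N0 e2
      by (simp add: field_simps)
    ultimately have "x = a + t *\<^sub>R v"
      unfolding vec2_eq a_def v_def by simp
    then show "x \<in> {a + t *\<^sub>R v | t. True}" by blast
  next
    fix x :: point assume "x \<in> {a + t *\<^sub>R v | t. True}"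
    then obtain t where "x = a + t *\<^sub>R v" by blast
    have N0: "N \<noteq> 0" using N by simp
    have "n1 * (c*n1) + n2 * (c*n2) = c * N"
      by (simp add: N_def power2_eq_square algebra_simps)
    then have "n1 * (c*n1/N) + n2 * (c*n2/N) = c" using N0
      by (simp add: field_simps)
    then show "x \<in> {x. n1 * x$1 + n2 * x$2 = c}"
      using \<open>x = _\<close> by (simp add: a_def v_def algebra_simps)
  qed
  then show ?thesis unfolding v_def by blast
qed

lemma normal_line:
  assumes "n1 \<noteq> 0 \<or> n2 \<noteq> 0"
  shows "is_line {x::real^2. n1 * x$1 + n2 * x$2 = c}"
proof -
  have v: "(vector [-n2, n1] :: point) \<noteq> 0" using assms by (auto simp: vec2_eq)
  obtain a where "{x::real^2. n1 * x$1 + n2 * x$2 = c} = {a + t *\<^sub>R vector [-n2, n1] | t. True}"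
    using line_param[OF assms] by blast
  then show ?thesis unfolding is_line_def using v by blast
qed


definition sqset :: "point set \<Rightarrow> point set \<Rightarrow> point \<Rightarrow> real set" where
  "sqset L L' p = {(norm (a - p))^2 | a. a \<in> L \<and> 2 *\<^sub>R p - a \<in> L'}"

lemma midpoint_iff: "(p::point) = midpoint a b \<longleftrightarrow> b = 2 *\<^sub>R p - a"
  unfolding midpoint_def vec2_eq by (auto simp: field_simps)

lemma dist_mid: "dist a (2 *\<^sub>R p - a) = 2 * norm (a - (p::point))"
proof -
  have "a - (2 *\<^sub>R p - a) = 2 *\<^sub>R (a - p)" by (simp add: algebra_simps scaleR_2)
  then show ?thesis by (simp add: dist_norm)
qed

lemma locus_eq:
  "rectangle_locus L1 L3 L2 L4 = {p. sqset L1 L3 p \<inter> sqset L2 L4 p \<noteq> {}}"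
proof (intro set_eqI iffI)
  fix p assume "p \<in> rectangle_locus L1 L3 L2 L4"
  then obtain a1 a3 b2 b4 where h: "a1 \<in> L1" "a3 \<in> L3" "b2 \<in> L2" "b4 \<in> L4"
    "p = midpoint a1 a3" "p = midpoint b2 b4" "dist a1 a3 = dist b2 b4"
    unfolding rectangle_locus_def by blast
  have e3: "a3 = 2 *\<^sub>R p - a1" "b4 = 2 *\<^sub>R p - b2"
    using midpoint_iff[of p a1 a3] midpoint_iff[of p b2 b4] h(5,6) by blast+
  have "norm (a1 - p) = norm (b2 - p)" using h(7) unfolding e3 dist_mid by simp
  then have nn: "(norm (a1 - p))^2 = (norm (b2 - p))^2" by simp
  have i3: "2 *\<^sub>R p - a1 \<in> L3" using h(2) e3(1) by simp
  have i4: "2 *\<^sub>R p - b2 \<in> L4" using h(4) e3(2) by simp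
  have m1: "(norm (a1 - p))^2 \<in> sqset L1 L3 p" unfolding sqset_def using h(1) i3 by blast
  have m2: "(norm (a1 - p))^2 \<in> sqset L2 L4 p" unfolding sqset_def nn using h(3) i4 by blast
  from m1 m2 have "(norm (a1 - p))^2 \<in> sqset L1 L3 p \<inter> sqset L2 L4 p" by (rule IntI)
  then show "p \<in> {p. sqset L1 L3 p \<inter> sqset L2 L4 p \<noteq> {}}" by blast
next
  fix p assume "p \<in> {p. sqset L1 L3 p \<inter> sqset L2 L4 p \<noteq> {}}"
  then obtain a1 b2 where h: "a1 \<in> L1" "2 *\<^sub>R p - a1 \<in> L3" "b2 \<in> L2" "2 *\<^sub>R p - b2 \<in> L4"
    "(norm (a1 - p))^2 = (norm (b2 - p))^2"
    unfolding sqset_def by auto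
  have "norm (a1 - p) = norm (b2 - p)" using h(5) by (simp add: power2_eq_iff_nonneg)
  then have "dist a1 (2 *\<^sub>R p - a1) = dist b2 (2 *\<^sub>R p - b2)" unfolding dist_mid by simp
  moreover have "p = midpoint a1 (2 *\<^sub>R p - a1)" "p = midpoint b2 (2 *\<^sub>R p - b2)"
    by (simp_all add: midpoint_iff)
  ultimately show "p \<in> rectangle_locus L1 L3 L2 L4"
    unfolding rectangle_locus_def using h(1-4) by blast
qed

definition qf :: "real \<Rightarrow> real \<Rightarrow> real \<Rightarrow> real \<Rightarrow> real \<Rightarrow> real \<Rightarrow> point \<Rightarrow> real" where
  "qf u11 u12 k1 u21 u22 k2 p = (u11*p$1 + u12*p$2 + k1)^2 + (u21*p$1 + u22*p$2 + k2)^2"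

lemma nonpar:
  assumes D: "n1 * m2 - n2 * m1 \<noteq> 0"
  shows "\<exists>u11 u12 k1 u21 u22 k2. (u11*u22 - u12*u21)^2 = 1 \<and>
     (\<forall>p. sqset {x. n1 * x$1 + n2 * x$2 = c} {x. m1 * x$1 + m2 * x$2 = e} p
          = {qf u11 u12 k1 u21 u22 k2 p})"
proof -
  define D where "D = n1 * m2 - n2 * m1"
  have D0: "D \<noteq> 0" using D unfolding D_def .
  define u11 where "u11 = -(n1*m2+m1*n2)/D"
  define u12 where "u12 = -2*n2*m2/D"
  define k1 where "k1 = (c*m2 + e*n2)/D"
  define u21 where "u21 = 2*m1*n1/D"
  define u22 where "u22 = (m2*n1+n2*m1)/D"
  define k2 where "k2 = -(e*n1 + c*m1)/D"
  have "u11*u22 - u12*u21 = (-(n1*m2+m1*n2)*(m2*n1+n2*m1) + 4*n2*m2*m1*n1) / (D*D)"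
    unfolding u11_def u12_def u21_def u22_def using D0 by (simp add: field_simps)
  also have "\<dots> = -(D*D) / (D*D)"
    unfolding D_def by (simp add: algebra_simps)
  also have "\<dots> = -1" using D0 by simp
  finally have det: "(u11*u22 - u12*u21)^2 = 1" by simp
  have "sqset {x. n1 * x$1 + n2 * x$2 = c} {x. m1 * x$1 + m2 * x$2 = e} p
          = {qf u11 u12 k1 u21 u22 k2 p}" for p :: point
  proof -
    define w1 where "w1 = u11*p$1 + u12*p$2 + k1"
    define w2 where "w2 = u21*p$1 + u22*p$2 + k2"
    define w :: point where "w = vector [w1, w2]"
    have key: "(n1 * a$1 + n2 * a$2 = c \<and> m1 * (2 *\<^sub>R p - a)$1 + m2 * (2 *\<^sub>R p - a)$2 = e)
       \<longleftrightarrow> a = p + w" for a :: point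
    proof
      assume h: "n1 * a$1 + n2 * a$2 = c \<and> m1 * (2 *\<^sub>R p - a)$1 + m2 * (2 *\<^sub>R p - a)$2 = e"
      have h1: "n1 * a$1 + n2 * a$2 = c" and h2: "m1 * (2 * p$1 - a$1) + m2 * (2 * p$2 - a$2) = e"
        using h by auto
      have "D * a$1 = D * (p$1 + w1)"
        unfolding w1_def u11_def u12_def k1_def using D0
        by (simp add: field_simps, unfold D_def h1[symmetric] h2[symmetric]) (simp add: algebra_simps)
      moreover have "D * a$2 = D * (p$2 + w2)"
        unfolding w2_def u21_def u22_def k2_def using D0
        by (simp add: field_simps, unfold D_def h1[symmetric] h2[symmetric]) (simp add: algebra_simps)
      ultimately show "a = p + w" using D0 unfolding vec2_eq w_def by simp
    next
      assume "a = p + w"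
      then have a1: "a$1 = p$1 + w1" and a2: "a$2 = p$2 + w2" unfolding w_def by auto
      have "D * (n1 * a$1 + n2 * a$2) = D * c"
        unfolding a1 a2 w1_def u11_def u12_def k1_def w2_def u21_def u22_def k2_def using D0
        by (simp add: field_simps, unfold D_def) (simp add: algebra_simps)
      moreover have "D * (m1 * (2 * p$1 - a$1) + m2 * (2 * p$2 - a$2)) = D * e"
        unfolding a1 a2 w1_def u11_def u12_def k1_def w2_def u21_def u22_def k2_def using D0
        by (simp add: field_simps, unfold D_def) (simp add: algebra_simps)
      ultimately show "n1 * a$1 + n2 * a$2 = c \<and> m1 * (2 *\<^sub>R p - a)$1 + m2 * (2 *\<^sub>R p - a)$2 = e"
        using D0 by simp
    qed
    have nw: "(norm w)^2 = qf u11 u12 k1 u21 u22 k2 p"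
      unfolding norm2 qf_def w_def w1_def w2_def by simp
    show ?thesis unfolding sqset_def using key nw by auto
  qed
  then show ?thesis using det by blast
qed


lemma par_conv:
  assumes D: "n1 * m2 - n2 * m1 = 0" and n: "n1 \<noteq> 0 \<or> n2 \<noteq> 0" and m: "m1 \<noteq> 0 \<or> m2 \<noteq> 0"
  shows "\<exists>e'. {x::point. m1 * x$1 + m2 * x$2 = e} = {x. n1 * x$1 + n2 * x$2 = e'}"
proof -
  obtain l where l: "m1 = l * n1" "m2 = l * n2"
  proof (cases "n1 = 0")
    case True
    then have "n2 \<noteq> 0" using n by simp
    then show ?thesis using that[of "m2/n2"] D True by simp
  next
    case False
    have "m2 = m1 / n1 * n2" using D False by (simp add: field_simps)
    then show ?thesis using that[of "m1/n1"] False by simp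
  qed
  have l0: "l \<noteq> 0" using m l by auto
  have "{x::point. m1 * x$1 + m2 * x$2 = e} = {x. n1 * x$1 + n2 * x$2 = e / l}"
    using l0 unfolding l by (auto simp: field_simps)
  then show ?thesis by blast
qed

lemma cauchy2: "(n1*u1 + n2*u2)^2 \<le> (n1^2 + n2^2) * (u1^2 + (u2::real)^2)"
proof -
  have "(n1^2 + n2^2) * (u1^2 + u2^2) - (n1*u1 + n2*u2)^2 = (n1*u2 - n2*u1)^2"
    by (simp add: power2_eq_square algebra_simps)
  then show ?thesis by (metis diff_ge_0_iff_ge zero_le_power2)
qed

lemma par:
  assumes n: "n1 \<noteq> 0 \<or> n2 \<noteq> 0"
  shows "sqset {x. n1 * x$1 + n2 * x$2 = c} {x. n1 * x$1 + n2 * x$2 = e} p =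
    (if 2 * (n1 * p$1 + n2 * p$2) = c + e then {r. r \<ge> (c - e)^2 / (4 * (n1^2 + n2^2))} else {})"
proof -
  define N where "N = n1^2 + n2^2"
  have N: "N > 0" using n unfolding N_def by (auto simp: sum_power2_gt_zero_iff)
  define b where "b = (c - e) / 2"
  have b2: "(c - e)^2 / (4 * (n1^2 + n2^2)) = b^2 / N"
    unfolding b_def N_def by (simp add: power2_eq_square field_simps)
  have mem: "a \<in> {x. n1 * x$1 + n2 * x$2 = c} \<and> 2 *\<^sub>R p - a \<in> {x. n1 * x$1 + n2 * x$2 = e}
     \<longleftrightarrow> n1 * a$1 + n2 * a$2 = c \<and> n1 * (2 * p$1 - a$1) + n2 * (2 * p$2 - a$2) = e" for a :: point
    by simp
  show ?thesis
  proof (cases "2 * (n1 * p$1 + n2 * p$2) = c + e")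
    case False
    have "\<not> (n1 * a$1 + n2 * a$2 = c \<and> n1 * (2 * p$1 - a$1) + n2 * (2 * p$2 - a$2) = e)" for a :: point
      using False by (auto simp: algebra_simps)
    then show ?thesis using False unfolding sqset_def mem by auto
  next
    case True
    have "sqset {x. n1 * x$1 + n2 * x$2 = c} {x. n1 * x$1 + n2 * x$2 = e} p = {r. r \<ge> b^2 / N}"
    proof (intro set_eqI iffI)
      fix r assume "r \<in> sqset {x. n1 * x$1 + n2 * x$2 = c} {x. n1 * x$1 + n2 * x$2 = e} p"
      then obtain a :: point where a: "n1 * a$1 + n2 * a$2 = c" and r: "r = (norm (a - p))^2"
        unfolding sqset_def mem by auto
      have nb: "n1 * (a - p)$1 + n2 * (a - p)$2 = b"
        using a True unfolding b_def by (simp add: algebra_simps)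
      have "b^2 \<le> N * r" using cauchy2[of n1 "(a-p)$1" n2 "(a-p)$2"]
        unfolding r norm2 N_def nb .
      then show "r \<in> {r. r \<ge> b^2 / N}" using N by (simp add: field_simps)
    next
      fix r assume "r \<in> {r. r \<ge> b^2 / N}"
      then have r: "r \<ge> b^2 / N" by simp
      define t where "t = sqrt ((r - b^2/N) / N)"
      have t2: "t^2 * N = r - b^2/N" unfolding t_def using r N by simp
      define u :: point where "u = vector [b/N * n1 - t * n2, b/N * n2 + t * n1]"
      define a where "a = p + u"
      have "n1 * u$1 + n2 * u$2 = b * (n1^2 + n2^2) / N"
        unfolding u_def by (simp add: power2_eq_square add_divide_distrib algebra_simps)
      then have nu: "n1 * u$1 + n2 * u$2 = b" using N n unfolding N_def by auto
      have "(norm u)^2 = (b/N * n1 - t * n2)^2 + (b/N * n2 + t * n1)^2"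
        unfolding norm2 u_def by simp
      also have "\<dots> = (b/N)^2 * (n1^2 + n2^2) + t^2 * (n1^2 + n2^2)"
        by (simp only: power2_eq_square) (simp add: algebra_simps add_divide_distrib)
      also have "\<dots> = (b/N)^2 * N + t^2 * N" unfolding N_def ..
      also have "\<dots> = r" using t2 N by (simp add: power2_eq_square field_simps)
      finally have nr: "(norm (a - p))^2 = r" unfolding a_def by simp
      have "n1 * a$1 + n2 * a$2 = c" "n1 * (2 * p$1 - a$1) + n2 * (2 * p$2 - a$2) = e"
        using nu True unfolding a_def b_def by (simp_all add: algebra_simps)
      then show "r \<in> sqset {x. n1 * x$1 + n2 * x$2 = c} {x. n1 * x$1 + n2 * x$2 = e} p"
        unfolding sqset_def mem using nr by blast
    qed
    then show ?thesis using True b2 by simp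
  qed
qed

lemma det_lemma:
  fixes a1 b1 c1 a2 b2 c2 :: real
  assumes h1: "a1 * c1 - b1^2 = 1" and h2: "a2 * c2 - b2^2 = 1" and a1: "a1 > 0" and a2: "a2 > 0"
  shows "(a1 = a2 \<and> b1 = b2 \<and> c1 = c2) \<or> (a1 - a2) * (c1 - c2) - (b1 - b2)^2 < 0"
proof (rule ccontr)
  assume nc: "\<not> ?thesis"
  have c1: "c1 > 0" using h1 a1 by (metis add_pos_nonneg diff_add_cancel pos_add_strict zero_less_mult_pos zero_less_one zero_le_power2 less_add_same_cancel1)
  have c2: "c2 > 0" using h2 a2 by (metis add_pos_nonneg diff_add_cancel pos_add_strict zero_less_mult_pos zero_less_one zero_le_power2 less_add_same_cancel1)
  define s where "s = a1 * c2 + a2 * c1"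
  have s0: "s > 0" unfolding s_def using a1 a2 c1 c2 by (simp add: add_pos_pos)
  have ge: "(a1 - a2) * (c1 - c2) - (b1 - b2)^2 \<ge> 0" using nc by linarith
  have "(a1 - a2) * (c1 - c2) - (b1 - b2)^2 = (a1*c1 - b1^2) + (a2*c2 - b2^2) - s + 2*b1*b2"
    unfolding s_def by (simp add: power2_eq_square algebra_simps)
  then have sle: "s \<le> 2 + 2*b1*b2" using ge h1 h2 by linarith
  have amgm: "s^2 - 4*(a1*c1)*(a2*c2) = (a1*c2 - a2*c1)^2"
    unfolding s_def by (simp add: power2_eq_square algebra_simps)
  have "4*(a1*c1)*(a2*c2) = (2 + 2*b1*b2)^2 + 4*(b1 - b2)^2"
    using h1 h2 by (simp add: power2_eq_square algebra_simps)
  then have eq: "s^2 = (2 + 2*b1*b2)^2 + 4*(b1 - b2)^2 + (a1*c2 - a2*c1)^2" using amgm by linarith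
  have "s^2 \<le> (2 + 2*b1*b2)^2" using sle s0 by (simp add: power_mono)
  then have z: "(b1 - b2)^2 = 0" "(a1*c2 - a2*c1)^2 = 0" using eq
    by (smt (verit) zero_le_power2)+
  then have b: "b1 = b2" and ac: "a1*c2 = a2*c1" by auto
  then have "a1 * c1 = a2 * c2" using h1 h2 by simp
  then have "a1 * a1 * (c1 * c2) = a2 * a2 * (c1 * c2)" using ac
    by (metis mult.assoc mult.commute)
  then have "a1 * a1 = a2 * a2" using c1 c2 by simp
  then have "a1 = a2" using a1 a2 by (metis less_eq_real_def power2_eq_square power2_eq_iff_nonneg)
  then have "c1 = c2" using ac a1 by simp
  then show False using nc b \<open>a1 = a2\<close> by simp
qed


lemma linear_class:
  assumes S: "S = {p::point. D * p$1 + E * p$2 + F = 0}"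
  shows "S = {} \<or> is_line S \<or> S = UNIV"
proof (cases "D = 0 \<and> E = 0")
  case True
  then show ?thesis using S by (cases "F = 0") auto
next
  case False
  have "S = {p::point. D * p$1 + E * p$2 = - F}" using S by (auto simp: algebra_simps)
  then show ?thesis using normal_line[of D E "-F"] False by auto
qed

lemma hyper_class:
  assumes S: "S = {p::point. A*(p$1)^2 + 2*B*p$1*p$2 + C*(p$2)^2 + D*p$1 + E*p$2 + F = 0}"
    and d: "A*C - B^2 < 0"
  shows "is_hyperbola S"
proof -
  define \<Delta> where "\<Delta> = A*C - B^2"
  have d0: "\<Delta> \<noteq> 0" using d unfolding \<Delta>_def by simp
  define q1 where "q1 = -(C*D - B*E)/(2*\<Delta>)"
  define q2 where "q2 = -(A*E - B*D)/(2*\<Delta>)"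
  have "A*q1 + B*q2 = -(A*(C*D - B*E) + B*(A*E - B*D))/(2*\<Delta>)"
    unfolding q1_def q2_def using d0 by (simp add: field_simps)
  also have "A*(C*D - B*E) + B*(A*E - B*D) = D*\<Delta>"
    unfolding \<Delta>_def by (simp add: power2_eq_square algebra_simps)
  finally have eD: "D = -2*(A*q1 + B*q2)" using d0 by simp
  have "B*q1 + C*q2 = -(B*(C*D - B*E) + C*(A*E - B*D))/(2*\<Delta>)"
    unfolding q1_def q2_def using d0 by (simp add: field_simps)
  also have "B*(C*D - B*E) + C*(A*E - B*D) = E*\<Delta>"
    unfolding \<Delta>_def by (simp add: power2_eq_square algebra_simps)
  finally have eE: "E = -2*(B*q1 + C*q2)" using d0 by simp
  define M :: "real^2^2" where "M = vector [vector [A, B], vector [B, C]]"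
  define q :: point where "q = vector [q1, q2]"
  define k where "k = A*q1^2 + 2*B*q1*q2 + C*q2^2 - F"
  have tM: "transpose M = M"
    unfolding M_def transpose_def by (simp add: vec_eq_iff forall_2)
  have dM: "det M < 0" unfolding M_def det_2 using d by (simp add: power2_eq_square)
  have form: "(x - q) \<bullet> (M *v (x - q)) = A*(x$1 - q1)^2 + 2*B*(x$1 - q1)*(x$2 - q2) + C*(x$2 - q2)^2"
    for x :: point
    unfolding M_def q_def by (simp add: matrix_vector_mult_def inner_vec_def sum_2 power2_eq_square algebra_simps)
  have "S = {x. (x - q) \<bullet> (M *v (x - q)) = k}"
    unfolding S form k_def eD eE by (simp add: power2_eq_square algebra_simps)
  then show ?thesis unfolding is_hyperbola_def using tM dM by blast
qed

lemma conic_class: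
  assumes S: "S = {p::point. A*(p$1)^2 + 2*B*p$1*p$2 + C*(p$2)^2 + D*p$1 + E*p$2 + F = 0}"
    and d: "(A = 0 \<and> B = 0 \<and> C = 0) \<or> A*C - B^2 < 0"
  shows "S = {} \<or> is_line S \<or> is_hyperbola S \<or> S = UNIV"
proof (cases "A*C - B^2 < 0")
  case True then show ?thesis using hyper_class[OF S] by blast
next
  case False
  then have "A = 0" "B = 0" "C = 0" using d by auto
  then have "S = {p::point. D * p$1 + E * p$2 + F = 0}" using S by simp
  then show ?thesis using linear_class by blast
qed


lemma lagrange_pos:
  fixes u11 u12 u21 u22 :: real
  assumes "(u11*u22 - u12*u21)^2 = 1"
  shows "(u11^2 + u21^2) * (u12^2 + u22^2) - (u11*u12 + u21*u22)^2 = 1"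
    and "u11^2 + u21^2 > 0"
proof -
  show "(u11^2 + u21^2) * (u12^2 + u22^2) - (u11*u12 + u21*u22)^2 = 1"
    using assms by (simp add: power2_eq_square algebra_simps)
  show "u11^2 + u21^2 > 0"
  proof (rule ccontr)
    assume "\<not> ?thesis"
    then have "u11 = 0" "u21 = 0" by (auto simp: sum_power2_gt_zero_iff)
    then show False using assms by simp
  qed
qed

lemma quad_class:
  assumes dU: "(u11*u22 - u12*u21)^2 = 1" and dW: "(w11*w22 - w12*w21)^2 = 1"
    and S: "S = {p. qf u11 u12 k1 u21 u22 k2 p = qf w11 w12 l1 w21 w22 l2 p}"
  shows "S = {} \<or> is_line S \<or> is_hyperbola S \<or> S = UNIV"
proof -
  define A where "A = (u11^2+u21^2) - (w11^2+w21^2)"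
  define B where "B = (u11*u12 + u21*u22) - (w11*w12+w21*w22)"
  define C where "C = (u12^2+u22^2) - (w12^2+w22^2)"
  define D where "D = 2*(u11*k1+u21*k2) - 2*(w11*l1+w21*l2)"
  define E where "E = 2*(u12*k1+u22*k2) - 2*(w12*l1+w22*l2)"
  define F where "F = k1^2+k2^2 - l1^2-l2^2"
  have S': "S = {p::point. A*(p$1)^2 + 2*B*p$1*p$2 + C*(p$2)^2 + D*p$1 + E*p$2 + F = 0}"
  proof -
    have "qf u11 u12 k1 u21 u22 k2 p - qf w11 w12 l1 w21 w22 l2 p =
      A*(p$1)^2 + 2*B*p$1*p$2 + C*(p$2)^2 + D*p$1 + E*p$2 + F" for p :: point
      unfolding qf_def A_def B_def C_def D_def E_def F_def
      by (simp add: power2_eq_square algebra_simps)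
    then show ?thesis unfolding S by (metis (no_types, opaque_lifting) eq_iff_diff_eq_0)
  qed
  have d: "(A = 0 \<and> B = 0 \<and> C = 0) \<or> A*C - B^2 < 0"
    using det_lemma[OF lagrange_pos(1)[OF dU] lagrange_pos(1)[OF dW] lagrange_pos(2)[OF dU] lagrange_pos(2)[OF dW]]
    unfolding A_def B_def C_def by auto
  show ?thesis using conic_class[OF S' d] .
qed

lemma quad_set:
  fixes a b c :: real
  assumes a: "a > 0"
  shows "(\<forall>t. a*t^2 + b*t + c \<ge> 0) \<or>
         (\<exists>t1 t2. t1 < t2 \<and> (\<forall>t. a*t^2 + b*t + c \<ge> 0 \<longleftrightarrow> t \<le> t1 \<or> t2 \<le> t))"
proof (cases "b^2 - 4*a*c \<le> 0")
  case True
  have "a*t^2 + b*t + c \<ge> 0" for t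
  proof -
    have "4*a*(a*t^2 + b*t + c) = (2*a*t + b)^2 - (b^2 - 4*a*c)"
      by (simp add: power2_eq_square algebra_simps)
    also have "\<dots> \<ge> 0" using True by (smt (verit) zero_le_power2)
    finally show ?thesis using a by (simp add: zero_le_mult_iff)
  qed
  then show ?thesis by blast
next
  case False
  define s where "s = sqrt (b^2 - 4*a*c)"
  have s0: "s > 0" unfolding s_def using False by simp
  have s2: "s^2 = b^2 - 4*a*c" unfolding s_def using False by simp
  define t1 where "t1 = (-b - s)/(2*a)"
  define t2 where "t2 = (-b + s)/(2*a)"
  have lt: "t1 < t2" unfolding t1_def t2_def using s0 a by (simp add: divide_strict_right_mono)
  have fac: "a*t^2 + b*t + c = a * ((t - t1) * (t - t2))" for t
  proof -
    have "4*a*(a * ((t - t1) * (t - t2))) = (2*a*t + b - s) * (2*a*t + b + s)"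
      unfolding t1_def t2_def using a by (simp add: field_simps)
    also have "\<dots> = 4*a*(a*t^2 + b*t + c)" using s2 by (simp add: power2_eq_square algebra_simps)
    finally show ?thesis using a by simp
  qed
  have "a*t^2 + b*t + c \<ge> 0 \<longleftrightarrow> t \<le> t1 \<or> t2 \<le> t" for t
    unfolding fac using a lt by (auto simp: zero_le_mult_iff)
  then show ?thesis using lt by blast
qed

lemma seg_param:
  fixes a v :: point
  assumes v: "v \<noteq> 0" and lt: "t1 < t2"
  shows "(a + t *\<^sub>R v \<in> open_segment (a + t1 *\<^sub>R v) (a + t2 *\<^sub>R v)) \<longleftrightarrow> t1 < t \<and> t < t2"
proof
  assume "a + t *\<^sub>R v \<in> open_segment (a + t1 *\<^sub>R v) (a + t2 *\<^sub>R v)"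
  then obtain u where u: "0 < u" "u < 1" and e: "a + t *\<^sub>R v = (1 - u) *\<^sub>R (a + t1 *\<^sub>R v) + u *\<^sub>R (a + t2 *\<^sub>R v)"
    unfolding in_segment by blast
  have "(1 - u) *\<^sub>R (a + t1 *\<^sub>R v) + u *\<^sub>R (a + t2 *\<^sub>R v) = a + ((1-u)*t1 + u*t2) *\<^sub>R v"
    by (simp add: algebra_simps)
  then have "t *\<^sub>R v = ((1-u)*t1 + u*t2) *\<^sub>R v" using e by simp
  then have "t = (1-u)*t1 + u*t2" using v by (simp add: scaleR_cancel_right)
  moreover have p1: "(t2 - t1) * u > 0" and p2: "(t2 - t1) * (1 - u) > 0" using u lt by simp_all
  have "t1 < (1-u)*t1 + u*t2" using p1 by (simp add: algebra_simps)
  moreover have "(1-u)*t1 + u*t2 < t2" using p2 by (simp add: algebra_simps)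
  ultimately show "t1 < t \<and> t < t2" by simp
next
  assume t: "t1 < t \<and> t < t2"
  define u where "u = (t - t1) / (t2 - t1)"
  have u: "0 < u" "u < 1" unfolding u_def using t lt by (auto simp: field_simps)
  have ut: "u * (t2 - t1) = t - t1" unfolding u_def using lt by simp
  have "(1-u)*t1 + u*t2 = t1 + u*(t2 - t1)" by (simp add: algebra_simps)
  then have tu: "(1-u)*t1 + u*t2 = t" using ut by simp
  have "(1 - u) *\<^sub>R (a + t1 *\<^sub>R v) + u *\<^sub>R (a + t2 *\<^sub>R v) = a + ((1-u)*t1 + u*t2) *\<^sub>R v"
    by (simp add: algebra_simps)
  then have "a + t *\<^sub>R v = (1 - u) *\<^sub>R (a + t1 *\<^sub>R v) + u *\<^sub>R (a + t2 *\<^sub>R v)" using tu by simp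
  moreover have "a + t1 *\<^sub>R v \<noteq> a + t2 *\<^sub>R v" using v lt by (simp add: scaleR_cancel_right)
  ultimately show "a + t *\<^sub>R v \<in> open_segment (a + t1 *\<^sub>R v) (a + t2 *\<^sub>R v)"
    unfolding in_segment using u by blast
qed


lemma caseB:
  assumes m: "m1 \<noteq> 0 \<or> m2 \<noteq> 0" and dW: "(w11*w22 - w12*w21)^2 = 1"
    and S: "S = {p. m1 * p$1 + m2 * p$2 = k \<and> h \<le> qf w11 w12 l1 w21 w22 l2 p}"
  shows "is_line S \<or> is_line_minus_open_segment S"
proof -
  define v :: point where "v = vector [-m2, m1]"
  have v: "v \<noteq> 0" using m by (auto simp: v_def vec2_eq)
  obtain a where L: "{x::point. m1 * x$1 + m2 * x$2 = k} = {a + t *\<^sub>R v | t. True}"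
    using line_param[OF m] unfolding v_def by blast
  define \<alpha>1 where "\<alpha>1 = w11 * (-m2) + w12 * m1"
  define \<alpha>2 where "\<alpha>2 = w21 * (-m2) + w22 * m1"
  define \<beta>1 where "\<beta>1 = w11 * a$1 + w12 * a$2 + l1"
  define \<beta>2 where "\<beta>2 = w21 * a$1 + w22 * a$2 + l2"
  define A where "A = \<alpha>1^2 + \<alpha>2^2"
  define B where "B = 2*(\<alpha>1*\<beta>1 + \<alpha>2*\<beta>2)"
  define C where "C = \<beta>1^2 + \<beta>2^2 - h"
  have g: "qf w11 w12 l1 w21 w22 l2 (a + t *\<^sub>R v) - h = A*t^2 + B*t + C" for t
    unfolding qf_def A_def B_def C_def \<alpha>1_def \<alpha>2_def \<beta>1_def \<beta>2_def v_def
    by (simp add: power2_eq_square algebra_simps)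
  have A0: "A > 0"
  proof (rule ccontr)
    assume "\<not> A > 0"
    then have z: "\<alpha>1 = 0" "\<alpha>2 = 0" unfolding A_def by (auto simp: sum_power2_gt_zero_iff)
    have "w22 * \<alpha>1 - w12 * \<alpha>2 = (w11*w22 - w12*w21) * (-m2)"
      unfolding \<alpha>1_def \<alpha>2_def by (simp add: algebra_simps)
    then have "m2 = 0" using z dW by auto
    have "w21 * \<alpha>1 - w11 * \<alpha>2 = - (w11*w22 - w12*w21) * m1"
      unfolding \<alpha>1_def \<alpha>2_def by (simp add: algebra_simps)
    then have "m1 = 0" using z dW by auto
    then show False using m \<open>m2 = 0\<close> by simp
  qed
  have gg: "(h \<le> qf w11 w12 l1 w21 w22 l2 (a + t *\<^sub>R v)) = (A*t^2 + B*t + C \<ge> 0)" for t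
    by (subst diff_ge_0_iff_ge[symmetric], subst g, rule refl)
  have S2: "S = {a + t *\<^sub>R v | t. A*t^2 + B*t + C \<ge> 0}"
  proof -
    have "S = {p. p \<in> {x::point. m1 * x$1 + m2 * x$2 = k} \<and> h \<le> qf w11 w12 l1 w21 w22 l2 p}"
      using S by simp
    also have "\<dots> = {a + t *\<^sub>R v | t. h \<le> qf w11 w12 l1 w21 w22 l2 (a + t *\<^sub>R v)}"
      unfolding L by blast
    also have "\<dots> = {a + t *\<^sub>R v | t. A*t^2 + B*t + C \<ge> 0}"
      by (simp only: gg)
    finally show ?thesis .
  qed
  have Lline: "is_line {x::point. m1 * x$1 + m2 * x$2 = k}" using normal_line[OF m] .
  consider "\<forall>t. A*t^2 + B*t + C \<ge> 0" | t1 t2 where "t1 < t2" "\<forall>t. A*t^2 + B*t + C \<ge> 0 \<longleftrightarrow> t \<le> t1 \<or> t2 \<le> t"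
    using quad_set[OF A0] by blast
  then show ?thesis
  proof cases
    case 1
    then have "S = {x::point. m1 * x$1 + m2 * x$2 = k}" unfolding S2 L by simp
    then show ?thesis using Lline by simp
  next
    case 2
    have "S = {x::point. m1 * x$1 + m2 * x$2 = k} - open_segment (a + t1 *\<^sub>R v) (a + t2 *\<^sub>R v)"
    proof (intro set_eqI iffI)
      fix x assume "x \<in> S"
      then obtain t where x: "x = a + t *\<^sub>R v" and t: "A*t^2 + B*t + C \<ge> 0" unfolding S2 by blast
      have e: "(A*t^2 + B*t + C \<ge> 0) = (t \<le> t1 \<or> t2 \<le> t)" using 2(2) by blast
      have "\<not> (t1 < t \<and> t < t2)" using t unfolding e by linarith
      have sp: "(a + t *\<^sub>R v \<in> open_segment (a + t1 *\<^sub>R v) (a + t2 *\<^sub>R v)) \<longleftrightarrow> t1 < t \<and> t < t2"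
        by (rule seg_param[OF v 2(1)])
      have "x \<notin> open_segment (a + t1 *\<^sub>R v) (a + t2 *\<^sub>R v)" unfolding x using iffD1[OF sp] \<open>\<not> (t1 < t \<and> t < t2)\<close> by blast
      then show "x \<in> {x::point. m1 * x$1 + m2 * x$2 = k} - open_segment (a + t1 *\<^sub>R v) (a + t2 *\<^sub>R v)" unfolding L x by blast
    next
      fix x assume x: "x \<in> {x::point. m1 * x$1 + m2 * x$2 = k} - open_segment (a + t1 *\<^sub>R v) (a + t2 *\<^sub>R v)"
      then obtain t where xt: "x = a + t *\<^sub>R v" unfolding L by blast
      have na: "a + t *\<^sub>R v \<notin> open_segment (a + t1 *\<^sub>R v) (a + t2 *\<^sub>R v)" using x xt by simp
      have sp: "(a + t *\<^sub>R v \<in> open_segment (a + t1 *\<^sub>R v) (a + t2 *\<^sub>R v)) \<longleftrightarrow> t1 < t \<and> t < t2"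
        by (rule seg_param[OF v 2(1)])
      have nt: "\<not> (t1 < t \<and> t < t2)" using na iffD2[OF sp] by blast
      have e: "(A*t^2 + B*t + C \<ge> 0) = (t \<le> t1 \<or> t2 \<le> t)" using 2(2) by blast
      have "A*t^2 + B*t + C \<ge> 0" unfolding e using nt by linarith
      then show "x \<in> S" unfolding S2 xt by blast
    qed
    note SS = this
    have i1: "(a + t1 *\<^sub>R v) \<in> {x::point. m1 * x$1 + m2 * x$2 = k}" unfolding L by blast
    have i2: "(a + t2 *\<^sub>R v) \<in> {x::point. m1 * x$1 + m2 * x$2 = k}" unfolding L by blast
    have ne: "(a + t1 *\<^sub>R v) \<noteq> (a + t2 *\<^sub>R v)" using v 2(1) by (simp add: scaleR_cancel_right)
    have "is_line_minus_open_segment S" unfolding is_line_minus_open_segment_def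
      apply (rule exI[of _ "{x::point. m1 * x$1 + m2 * x$2 = k}"])
      apply (rule exI[of _ "a + t1 *\<^sub>R v"])
      apply (rule exI[of _ "a + t2 *\<^sub>R v"])
      using Lline i1 i2 ne SS by simp
    then show ?thesis ..
  qed
qed

lemma caseC:
  assumes n: "n1 \<noteq> 0 \<or> n2 \<noteq> 0" and m: "m1 \<noteq> 0 \<or> m2 \<noteq> 0"
    and S: "S = {p::point. n1 * p$1 + n2 * p$2 = c \<and> m1 * p$1 + m2 * p$2 = e}"
  shows "S = {} \<or> (\<exists>q. S = {q}) \<or> is_line S"
proof (cases "n1 * m2 - n2 * m1 = 0")
  case True
  obtain e' where e': "{x::point. m1 * x$1 + m2 * x$2 = e} = {x. n1 * x$1 + n2 * x$2 = e'}"
    using par_conv[OF True n m] by blast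
  have S2: "S = {p::point. n1 * p$1 + n2 * p$2 = c} \<inter> {x. n1 * x$1 + n2 * x$2 = e'}"
    unfolding S e'[symmetric] by blast
  show ?thesis
  proof (cases "c = e'")
    case True
    then have "S = {p::point. n1 * p$1 + n2 * p$2 = c}" unfolding S2 by simp
    then show ?thesis using normal_line[OF n] by simp
  next
    case False
    then have "S = {}" unfolding S2 by auto
    then show ?thesis by simp
  qed
next
  case False
  define D where "D = n1 * m2 - n2 * m1"
  have D0: "D \<noteq> 0" using False unfolding D_def .
  define q :: point where "q = vector [(c*m2 - e*n2)/D, (n1*e - m1*c)/D]"
  have "S = {q}"
  proof (intro set_eqI iffI)
    fix p :: point assume "p \<in> S"
    then have h1: "n1 * p$1 + n2 * p$2 = c" and h2: "m1 * p$1 + m2 * p$2 = e" using S by auto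
    have "D * p$1 = c*m2 - e*n2" unfolding D_def h1[symmetric] h2[symmetric] by (simp add: algebra_simps)
    moreover have "D * p$2 = n1*e - m1*c" unfolding D_def h1[symmetric] h2[symmetric] by (simp add: algebra_simps)
    ultimately have "p$1 = (c*m2 - e*n2)/D" "p$2 = (n1*e - m1*c)/D" using D0 by (simp_all add: field_simps)
    then show "p \<in> {q}" unfolding q_def by (simp add: vec2_eq)
  next
    fix p :: point assume "p \<in> {q}"
    then have p: "p$1 = (c*m2 - e*n2)/D" "p$2 = (n1*e - m1*c)/D" unfolding q_def by auto
    have "n1 * p$1 + n2 * p$2 = (n1*(c*m2 - e*n2) + n2*(n1*e - m1*c))/D"
      unfolding p by (simp add: add_divide_distrib)
    also have "n1*(c*m2 - e*n2) + n2*(n1*e - m1*c) = c * D" unfolding D_def by (simp add: algebra_simps)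
    finally have 1: "n1 * p$1 + n2 * p$2 = c" using D0 by simp
    have "m1 * p$1 + m2 * p$2 = (m1*(c*m2 - e*n2) + m2*(n1*e - m1*c))/D"
      unfolding p by (simp add: add_divide_distrib)
    also have "m1*(c*m2 - e*n2) + m2*(n1*e - m1*c) = e * D" unfolding D_def by (simp add: algebra_simps)
    finally have 2: "m1 * p$1 + m2 * p$2 = e" using D0 by simp
    show "p \<in> S" using S 1 2 by simp
  qed
  then show ?thesis by blast
qed


lemma pair_form:
  assumes L: "is_line L" and L': "is_line L'"
  shows "(\<exists>u11 u12 k1 u21 u22 k2. (u11*u22 - u12*u21)^2 = 1 \<and>
            (\<forall>p. sqset L L' p = {qf u11 u12 k1 u21 u22 k2 p}))
       \<or> (\<exists>m1 m2 k h. (m1 \<noteq> 0 \<or> m2 \<noteq> 0) \<and>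
            (\<forall>p. sqset L L' p = (if m1 * p$1 + m2 * p$2 = k then {r. h \<le> r} else {})))"
proof -
  obtain n1 n2 c where n: "n1 \<noteq> 0 \<or> n2 \<noteq> 0" and Le: "L = {x. n1 * x$1 + n2 * x$2 = c}"
    using line_normal[OF L] by blast
  obtain m1 m2 e where m: "m1 \<noteq> 0 \<or> m2 \<noteq> 0" and L'e: "L' = {x. m1 * x$1 + m2 * x$2 = e}"
    using line_normal[OF L'] by blast
  show ?thesis
  proof (cases "n1 * m2 - n2 * m1 = 0")
    case False
    show ?thesis using nonpar[OF False, of c e] unfolding Le L'e by blast
  next
    case True
    obtain e' where e': "{x::point. m1 * x$1 + m2 * x$2 = e} = {x. n1 * x$1 + n2 * x$2 = e'}"
      using par_conv[OF True n m] by blast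
    have n2: "2*n1 \<noteq> 0 \<or> 2*n2 \<noteq> 0" using n by simp
    have "\<forall>p. sqset L L' p = (if (2*n1) * p$1 + (2*n2) * p$2 = c + e'
             then {r. (c - e')^2 / (4 * (n1^2 + n2^2)) \<le> r} else {})"
      unfolding Le L'e e' using par[OF n, of c e'] by (simp add: algebra_simps)
    then show ?thesis using n2 by blast
  qed
qed

theorem corollary4p9:
  fixes L1 L2 L3 L4 :: "point set"
  assumes "is_line L1" "is_line L2" "is_line L3" "is_line L4"
    and "L1 \<noteq> L3" "L2 \<noteq> L4"
    and "{L1, L3} \<noteq> {L2, L4}"
  shows "rectangle_locus L1 L3 L2 L4 = {} \<or>
         (\<exists>q. rectangle_locus L1 L3 L2 L4 = {q}) \<or>
         is_line_minus_open_segment (rectangle_locus L1 L3 L2 L4) \<or>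
         is_line (rectangle_locus L1 L3 L2 L4) \<or>
         is_hyperbola (rectangle_locus L1 L3 L2 L4) \<or>
         rectangle_locus L1 L3 L2 L4 = UNIV"
proof -
  define R where "R = rectangle_locus L1 L3 L2 L4"
  have R: "R = {p. sqset L1 L3 p \<inter> sqset L2 L4 p \<noteq> {}}" unfolding R_def by (rule locus_eq)
  have "R = {} \<or> (\<exists>q. R = {q}) \<or> is_line_minus_open_segment R \<or> is_line R \<or> is_hyperbola R \<or> R = UNIV"
  proof -
    consider (A1) u11 u12 k1 u21 u22 k2 where "(u11*u22 - u12*u21)^2 = 1"
            "\<forall>p. sqset L1 L3 p = {qf u11 u12 k1 u21 u22 k2 p}"
      | (B1) m1 m2 k h where "m1 \<noteq> 0 \<or> m2 \<noteq> 0"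
            "\<forall>p. sqset L1 L3 p = (if m1 * p$1 + m2 * p$2 = k then {r. h \<le> r} else {})"
      using pair_form[OF assms(1) assms(3)] by blast
    note c1 = this
    consider (A2) w11 w12 l1 w21 w22 l2 where "(w11*w22 - w12*w21)^2 = 1"
            "\<forall>p. sqset L2 L4 p = {qf w11 w12 l1 w21 w22 l2 p}"
      | (B2) m1' m2' k' h' where "m1' \<noteq> 0 \<or> m2' \<noteq> 0"
            "\<forall>p. sqset L2 L4 p = (if m1' * p$1 + m2' * p$2 = k' then {r. h' \<le> r} else {})"
      using pair_form[OF assms(2) assms(4)] by blast
    note c2 = this
    show ?thesis
    proof (cases rule: c1)
      case A1
      note a1 = A1
      show ?thesis
      proof (cases rule: c2)
        case A2
        have "R = {p. qf u11 u12 k1 u21 u22 k2 p = qf w11 w12 l1 w21 w22 l2 p}"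
          unfolding R using a1(2) A2(2) by auto
        then show ?thesis using quad_class[OF a1(1) A2(1)] by blast
      next
        case B2
        have "R = {p. m1' * p$1 + m2' * p$2 = k' \<and> h' \<le> qf u11 u12 k1 u21 u22 k2 p}"
          unfolding R using a1(2) B2(2) by auto
        then show ?thesis using caseB[OF B2(1) a1(1)] by blast
      qed
    next
      case B1
      note b1 = B1
      show ?thesis
      proof (cases rule: c2)
        case A2
        have "R = {p. m1 * p$1 + m2 * p$2 = k \<and> h \<le> qf w11 w12 l1 w21 w22 l2 p}"
          unfolding R using b1(2) A2(2) by auto
        then show ?thesis using caseB[OF b1(1) A2(1)] by blast
      next
        case B2
        have "R = {p. m1 * p$1 + m2 * p$2 = k \<and> m1' * p$1 + m2' * p$2 = k'}"
        proof -
          have "{r. h \<le> r} \<inter> {r. h' \<le> r} \<noteq> {}"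
            by (metis (mono_tags, lifting) Int_iff empty_iff max.cobounded1 max.cobounded2 mem_Collect_eq)
          then show ?thesis unfolding R using b1(2) B2(2) by auto
        qed
        then show ?thesis using caseC[OF b1(1) B2(1)] by blast
      qed
    qed
  qed
  then show ?thesis unfolding R_def .
qed

end
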